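(* Assume the standing setting below. Let $\alpha\in(0,1/6]$ with $\alpha n$ an integer, let $P_1,P_2\subseteq X$ be disjoint with $|P_1|=|P_2|=\alpha n$, and let $T\subseteq X$ be nonempty. Let $F_c:=\mathrm{far}_{4(k+1)\phi_\alpha}(X\setminus P_1,T)$ and let $\mathcal{B}_c=(\mathcal{B}_c(1),\ldots,\mathcal{B}_c(L))$ be a $(\phi_\alpha/3)$-linear bin division of $(X\setminus P_1)\setminus F_c$ with respect to $T$. If $\mathcal{B}_c$ is well-represented in $P_2$ for $X\setminus P_1$, then for all $i\in[L-1]$, $$R(\mathcal{B}_c(i)\cap P_2,T)\ge\frac\alpha3\,R(\mathcal{B}_c(i+1),T).$$
   Context: Standing setting: $(X,\rho)$ is a finite metric space with $|X|=n$; $k\ge2$ is an integer and $\delta\in(0,1)$; $\log$ is the natural logarithm; for $\alpha>0$, $\phi_\alpha:=150\log(32k/\delta)/\alpha$. For nonempty $T\subseteq X$, $\rho(x,T):=\min_{y\in T}\rho(x,y)$ and $R(S,T):=\sum_{x\in S}\rho(x,T)$; ties are broken by a fixed ordering of $X$. For $S\subseteq X$ and real $r\ge0$, $\mathrm{far}_r(S,T)$ is the set of the $\lceil r\rceil$ points of $S$ furthest from $T$; if $|S|<r$, $\mathrm{far}_r(S,T):=S$ (trivial far set). For finite $W$, $A,B\subseteq W$, $B$ is well-represented in $A$ for $W$ if $|B\cap A|/|B|\in[r/2,\frac32 r]$ with $r=|A|/|W|$; a bin division is well-represented if all its bins are. A $z$-linear bin division ($z>0$) of $W$ with respect to $T$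 is a partition $(\mathcal{B}(1),\ldots,\mathcal{B}(L))$ of $W$ with: (1) if $z\le|W|$, $|\mathcal{B}(i)|\ge z(i+1)/2$ for all $i$; otherwise it is trivial, $\mathcal{B}(1):=W$; (2) $|\mathcal{B}(1)|\le\frac52 z$; (3) $|\mathcal{B}(i+1)|/|\mathcal{B}(i)|\le3/2$; (4) $\rho(x,T)\ge\rho(x',T)$ whenever $x\in\mathcal{B}(i)$, $x'\in\mathcal{B}(i+1)$. *)

theory Defs
  imports Complex_Main
begin

definition metric_on :: "'a set \<Rightarrow> ('a \<Rightarrow> 'a \<Rightarrow> real) \<Rightarrow> bool" where
  "metric_on X rho \<longleftrightarrow>
     (\<forall>x\<in>X. \<forall>y\<in>X. rho x y \<ge> 0) \<and>
     (\<forall>x\<in>X. \<forall>y\<in>X. rho x y = 0 \<longleftrightarrow> x = y) \<and>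
     (\<forall>x\<in>X. \<forall>y\<in>X. rho x y = rho y x) \<and>
     (\<forall>x\<in>X. \<forall>y\<in>X. \<forall>z\<in>X. rho x z \<le> rho x y + rho y z)"

definition phi :: "nat \<Rightarrow> real \<Rightarrow> real \<Rightarrow> real" where
  "phi k \<delta> \<alpha> = 150 * ln (32 * real k / \<delta>) / \<alpha>"

definition dist_to :: "('a \<Rightarrow> 'a \<Rightarrow> real) \<Rightarrow> 'a \<Rightarrow> 'a set \<Rightarrow> real" where
  "dist_to rho x T = Min ((rho x) ` T)"

definition Rcost :: "('a \<Rightarrow> 'a \<Rightarrow> real) \<Rightarrow> 'a set \<Rightarrow> 'a set \<Rightarrow> real" where
  "Rcost rho S T = (\<Sum>x\<in>S. dist_to rho x T)"

text \<open>x is strictly further from T than y, ties broken by the fixed (linear) order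
  of the point type: among equally distant points, the smaller one counts as further.\<close>
definition further :: "('a::linorder \<Rightarrow> 'a \<Rightarrow> real) \<Rightarrow> 'a set \<Rightarrow> 'a \<Rightarrow> 'a \<Rightarrow> bool" where
  "further rho T x y \<longleftrightarrow>
     dist_to rho x T > dist_to rho y T \<or> (dist_to rho x T = dist_to rho y T \<and> x < y)"

text \<open>far_r(S,T): the ceiling(r) points of S furthest from T; S itself if |S| < r.\<close>
definition far :: "('a::linorder \<Rightarrow> 'a \<Rightarrow> real) \<Rightarrow> real \<Rightarrow> 'a set \<Rightarrow> 'a set \<Rightarrow> 'a set" where
  "far rho r S T =
     (if real (card S) < r then S
      else {x\<in>S. int (card {y\<in>S. further rho T y x}) < \<lceil>r\<rceil>})"

definition well_represented :: "'a set \<Rightarrow> 'a set \<Rightarrow> 'a set \<Rightarrow> bool" where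
  "well_represented W A B \<longleftrightarrow>
     (let r = real (card A) / real (card W);
          q = real (card (B \<inter> A)) / real (card B)
      in r / 2 \<le> q \<and> q \<le> 3 / 2 * r)"

definition bins_well_represented :: "'a set \<Rightarrow> 'a set \<Rightarrow> (nat \<Rightarrow> 'a set) \<Rightarrow> nat \<Rightarrow> bool" where
  "bins_well_represented W A B L \<longleftrightarrow> (\<forall>i\<in>{1..L}. well_represented W A (B i))"

definition linear_bin_division ::
  "('a \<Rightarrow> 'a \<Rightarrow> real) \<Rightarrow> real \<Rightarrow> 'a set \<Rightarrow> 'a set \<Rightarrow> (nat \<Rightarrow> 'a set) \<Rightarrow> nat \<Rightarrow> bool" where
  "linear_bin_division rho z W T B L \<longleftrightarrow>
     L \<ge> 1 \<and>
     (\<Union>i\<in>{1..L}. B i) = W \<and>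
     (\<forall>i\<in>{1..L}. \<forall>j\<in>{1..L}. i \<noteq> j \<longrightarrow> B i \<inter> B j = {}) \<and>
     (if z \<le> real (card W)
      then (\<forall>i\<in>{1..L}. real (card (B i)) \<ge> z * (real i + 1) / 2)
      else L = 1 \<and> B 1 = W) \<and>
     real (card (B 1)) \<le> 5 / 2 * z \<and>
     (\<forall>i\<in>{1..<L}. real (card (B (i + 1))) / real (card (B i)) \<le> 3 / 2) \<and>
     (\<forall>i\<in>{1..<L}. \<forall>x\<in>B i. \<forall>x'\<in>B (i + 1). dist_to rho x T \<ge> dist_to rho x' T)"

end

theory Submission
  imports Defs
begin

theorem lemma15:
  fixes X :: "'a::linorder set" and rho :: "'a \<Rightarrow> 'a \<Rightarrow> real"
    and n k :: nat and \<delta> \<alpha> :: real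
    and P1 P2 T :: "'a set" and B :: "nat \<Rightarrow> 'a set" and L :: nat
  assumes "finite X" and "metric_on X rho" and "n = card X"
    and "k \<ge> 2" and "0 < \<delta>" and "\<delta> < 1"
    and "0 < \<alpha>" and "\<alpha> \<le> 1 / 6" and "\<alpha> * real n \<in> \<int>"
    and "P1 \<subseteq> X" and "P2 \<subseteq> X" and "P1 \<inter> P2 = {}"
    and "real (card P1) = \<alpha> * real n" and "real (card P2) = \<alpha> * real n"
    and "T \<subseteq> X" and "T \<noteq> {}"
    and "linear_bin_division rho (phi k \<delta> \<alpha> / 3)
           ((X - P1) - far rho (4 * (real k + 1) * phi k \<delta> \<alpha>) (X - P1) T) T B L"
    and "bins_well_represented (X - P1) P2 B L"
  shows "\<forall>i\<in>{1..<L}. Rcost rho (B i \<inter> P2) T \<ge> \<alpha> / 3 * Rcost rho (B (i + 1)) T"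
proof
  fix i assume i: "i \<in> {1..<L}"
  define W where "W = (X - P1) - far rho (4 * (real k + 1) * phi k \<delta> \<alpha>) (X - P1) T"
  have lbd: "linear_bin_division rho (phi k \<delta> \<alpha> / 3) W T B L" using assms(17) W_def by simp
  have union: "(\<Union>j\<in>{1..L}. B j) = W" using lbd unfolding linear_bin_division_def by blast
  have WX: "W \<subseteq> X - P1" unfolding W_def by blast
  have BiW: "B i \<subseteq> W" using union i by auto
  have Bi1W: "B (i+1) \<subseteq> W" using union i by auto
  have BiX: "B i \<subseteq> X" using BiW WX by blast
  have Bi1X: "B (i+1) \<subseteq> X" using Bi1W WX by blast
  have finT: "finite T" using assms(1,15) finite_subset by blast
  have dnn: "dist_to rho x T \<ge> 0" if "x \<in> X" for x
  proof -
    have "\<forall>y\<in>T. rho x y \<ge> 0" using assms(2,15) that unfolding metric_on_def by blast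
    then show ?thesis unfolding dist_to_def using finT assms(16) by (simp add: Min_ge_iff)
  qed
  have mono: "\<forall>x\<in>B i. \<forall>x'\<in>B (i + 1). dist_to rho x T \<ge> dist_to rho x' T"
    using lbd i unfolding linear_bin_division_def by blast
  have ratio: "real (card (B (i + 1))) / real (card (B i)) \<le> 3 / 2"
    using lbd i unfolding linear_bin_division_def by blast
  have wr: "well_represented (X - P1) P2 (B i)" using assms(18) i
    unfolding bins_well_represented_def by auto
  define r where "r = real (card P2) / real (card (X - P1))"
  have wr': "r / 2 \<le> real (card (B i \<inter> P2)) / real (card (B i))"
    using wr unfolding well_represented_def r_def Let_def by simp
  have finBi: "finite (B i)" using BiX assms(1) finite_subset by blast
  have finBi1: "finite (B (i+1))" using Bi1X assms(1) finite_subset by blast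
  define A where "A = B i \<inter> P2"
  have finA: "finite A" unfolding A_def using finBi by blast
  have RAnn: "Rcost rho A T \<ge> 0" unfolding Rcost_def A_def
    using dnn BiX by (intro sum_nonneg) auto
  have RBnn: "Rcost rho (B (i+1)) T \<ge> 0" unfolding Rcost_def
    using dnn Bi1X by (intro sum_nonneg) auto
  have dbl: "real (card A) * Rcost rho (B (i+1)) T \<le> real (card (B (i+1))) * Rcost rho A T"
  proof -
    have "real (card A) * Rcost rho (B (i+1)) T = (\<Sum>x\<in>A. \<Sum>y\<in>B (i+1). dist_to rho y T)"
      unfolding Rcost_def by simp
    also have "\<dots> \<le> (\<Sum>x\<in>A. \<Sum>y\<in>B (i+1). dist_to rho x T)"
      using mono unfolding A_def by (intro sum_mono) auto
    also have "\<dots> = real (card (B (i+1))) * Rcost rho A T"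
      unfolding Rcost_def by (simp add: sum_distrib_left mult.commute)
    finally show ?thesis .
  qed
  show "Rcost rho (B i \<inter> P2) T \<ge> \<alpha> / 3 * Rcost rho (B (i + 1)) T"
  proof (cases "B (i+1) = {}")
    case True
    then show ?thesis using RAnn A_def by (simp add: Rcost_def)
  next
    case False
    hence c1: "card (B (i+1)) > 0" using finBi1 by (simp add: card_gt_0_iff)
    have "X \<noteq> {}" using False Bi1X by blast
    hence npos: "n > 0" using assms(1,3) by (simp add: card_gt_0_iff)
    have cXP: "real (card (X - P1)) = real n - \<alpha> * real n"
      using assms(1,3,10,13) card_Diff_subset[of P1 X] finite_subset[OF assms(10) assms(1)]
        card_mono[OF assms(1) assms(10)] by (simp add: of_nat_diff)
    have "\<alpha> * real n \<le> 1/6 * real n" using assms(8) by (intro mult_right_mono) auto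
    hence cpos: "real (card (X - P1)) > 0" using cXP npos by simp
    have rge: "r \<ge> \<alpha>"
    proof -
      have "\<alpha> * real (card (X - P1)) \<le> \<alpha> * real n" using cXP assms(7) npos
        by (intro mult_left_mono) auto
      then show ?thesis unfolding r_def using cpos assms(14) by (simp add: field_simps)
    qed
    have BiNe: "B i \<noteq> {}"
    proof
      assume "B i = {}"
      hence "r \<le> 0" using wr' by simp
      thus False using rge assms(7) by simp
    qed
    hence cBi: "card (B i) > 0" using finBi by (simp add: card_gt_0_iff)
    have h1: "real (card A) \<ge> \<alpha> / 2 * real (card (B i))"
    proof -
      have "r * real (card (B i)) \<le> 2 * real (card (B i \<inter> P2))"
        using wr' cBi by (simp add: field_simps)
      moreover have "\<alpha> * real (card (B i)) \<le> r * real (card (B i))"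
        using rge by (intro mult_right_mono) auto
      ultimately show ?thesis unfolding A_def by simp
    qed
    have h2: "real (card (B (i+1))) \<le> 3/2 * real (card (B i))"
      using ratio cBi by (simp add: field_simps)
    have h3: "\<alpha> / 3 * real (card (B (i+1))) \<le> real (card A)"
    proof -
      have "\<alpha> / 3 * real (card (B (i+1))) \<le> \<alpha> / 3 * (3/2 * real (card (B i)))"
        using h2 assms(7) by (intro mult_left_mono) auto
      thus ?thesis using h1 by simp
    qed
    have "\<alpha> / 3 * real (card (B (i+1))) * Rcost rho (B (i+1)) T
          \<le> real (card (B (i+1))) * Rcost rho A T"
      using dbl h3 RBnn by (smt (verit) mult_right_mono)
    hence "real (card (B (i+1))) * (\<alpha> / 3 * Rcost rho (B (i+1)) T)
          \<le> real (card (B (i+1))) * Rcost rho A T" by (simp add: algebra_simps)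
    hence "\<alpha> / 3 * Rcost rho (B (i+1)) T \<le> Rcost rho A T"
      using c1 by (simp add: mult_le_cancel_left_pos)
    then show ?thesis unfolding A_def .
  qed
qed

end
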